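(* Let $G$ be a connected graph with minimum degree $\delta\geq 2$ such that for every edge $v_iv_j\in E(G)$ we have $|d_i-d_j|\leq (2k-1)^{2}$, where $k=\min\{d_i,d_j\}$. Then $GA(G)>ABC(G)$.
   Context: All graphs are finite, simple and undirected; $d_i$ denotes the degree of vertex $v_i$. The first geometric-arithmetic index is $GA(G)=\sum_{v_iv_j\in E(G)}\frac{2\sqrt{d_id_j}}{d_i+d_j}$ and the atom-bond connectivity index is $ABC(G)=\sum_{v_iv_j\in E(G)}\sqrt{\frac{d_i+d_j-2}{d_id_j}}$. *)

theory Defs
  imports Complex_Main
begin

definition simple_graph :: "'a set \<Rightarrow> 'a set set \<Rightarrow> bool" where
  "simple_graph V E \<longleftrightarrow> finite V \<and> (\<forall>e\<in>E. e \<subseteq> V \<and> card e = 2)"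

definition adj :: "'a set set \<Rightarrow> 'a \<Rightarrow> 'a \<Rightarrow> bool" where
  "adj E u v \<longleftrightarrow> {u, v} \<in> E"

definition degree :: "'a set set \<Rightarrow> 'a \<Rightarrow> nat" where
  "degree E v = card {e \<in> E. v \<in> e}"

definition connected_graph :: "'a set \<Rightarrow> 'a set set \<Rightarrow> bool" where
  "connected_graph V E \<longleftrightarrow> V \<noteq> {} \<and> (\<forall>u\<in>V. \<forall>v\<in>V. (adj E)\<^sup>*\<^sup>* u v)"

definition min_degree :: "'a set \<Rightarrow> 'a set set \<Rightarrow> nat" where
  "min_degree V E = Min (degree E ` V)"

text \<open>Each edge e = {u,v} contributes f (d_u) (d_v); f symmetric in the uses below.\<close>
definition edge_sum :: "'a set set \<Rightarrow> (real \<Rightarrow> real \<Rightarrow> real) \<Rightarrow> real" where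
  "edge_sum E f = (\<Sum>e\<in>E. (THE r. \<exists>u v. e = {u, v} \<and> r = f (real (degree E u)) (real (degree E v))))"

definition GA_index :: "'a set set \<Rightarrow> real" where
  "GA_index E = edge_sum E (\<lambda>a b. 2 * sqrt (a * b) / (a + b))"

definition ABC_index :: "'a set set \<Rightarrow> real" where
  "ABC_index E = edge_sum E (\<lambda>a b. sqrt ((a + b - 2) / (a * b)))"

end

theory Submission imports Defs begin
lemma poly_key:
  fixes k t :: real assumes k: "k \<ge> 1" and t0: "t \<ge> 0" and tm: "t \<le> (2*k-1)^2"
  shows "(2*k+t)^2*(2*k+t-2) < 4*k^2*(k+t)^2"
proof -
  have e: "4*k^2*(k+t)^2 - (2*k+t)^2*(2*k+t-2) = 4*k^2*(k^2-2*k+2) + t*(8*k^3-12*k^2+8*k) + t^2*(4*k^2-6*k+2) - t^3"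
    by (simp add: power2_eq_square power3_eq_cube algebra_simps)
  have a: "t^2*(2*k-1) \<le> t*(2*k-1)^3"
  proof -
    have "t*t*(2*k-1) \<le> t*(2*k-1)^2*(2*k-1)"
      using k t0 tm by (intro mult_right_mono mult_left_mono) auto
    thus ?thesis by (simp add: power2_eq_square power3_eq_cube algebra_simps)
  qed
  have b: "t^2*(4*k^2-6*k+2) - t^3 \<ge> t^2*(1-2*k)"
  proof -
    have "t^2*(4*k^2-6*k+2) - t^3 - t^2*(1-2*k) = t^2*((2*k-1)^2 - t)"
      by (simp add: power2_eq_square power3_eq_cube algebra_simps)
    also have "\<dots> \<ge> 0" using tm by simp
    finally show ?thesis by simp
  qed
  have c: "(2*k-1)^3 = 8*k^3-12*k^2+6*k-1" by (simp add: power2_eq_square power3_eq_cube algebra_simps)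
  have d: "k^2-2*k+2 > 0" proof -
    have "k^2-2*k+2 = (k-1)^2 + 1" by (simp add: power2_eq_square algebra_simps)
    thus ?thesis by (smt (verit) zero_le_power2)
  qed
  have "k^2 > 0" using k by simp
  hence "4*k^2*(k^2-2*k+2) > 0" using d by simp
  moreover have "t*(2*k+1) \<ge> 0" using t0 k by simp
  moreover have "t*(8*k^3-12*k^2+8*k) + t^2*(4*k^2-6*k+2) - t^3 \<ge> t*(2*k+1)"
  proof -
    have a': "t^2*(2*k-1) \<le> t*(8*k^3-12*k^2+6*k-1)" using a c by simp
    have "t*(8*k^3-12*k^2+8*k) - t*(8*k^3-12*k^2+6*k-1) = t*(2*k+1)" by (simp add: algebra_simps)
    moreover have "t^2*(1-2*k) = - (t^2*(2*k-1))" by (simp add: algebra_simps)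
    ultimately show ?thesis using a' b by linarith
  qed
  ultimately show ?thesis using e by linarith
qed

lemma edge_ineq:
  fixes a b :: real assumes "a \<ge> 2" "b \<ge> 2" "\<bar>a - b\<bar> \<le> (2*min a b - 1)^2"
  shows "sqrt ((a+b-2)/(a*b)) < 2*sqrt(a*b)/(a+b)"
proof -
  have key: "(a+b)^2*(a+b-2) < 4*(a*b)^2"
  proof (cases "a \<le> b")
    case True
    have "(2*a+(b-a))^2*(2*a+(b-a)-2) < 4*a^2*(a+(b-a))^2"
      using assms True by (intro poly_key) auto
    thus ?thesis by (simp add: power_mult_distrib algebra_simps)
  next
    case False
    have "(2*b+(a-b))^2*(2*b+(a-b)-2) < 4*b^2*(b+(a-b))^2"
      using assms False by (intro poly_key) auto
    thus ?thesis by (simp add: power_mult_distrib algebra_simps)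
  qed
  have pab: "a*b > 0" "a+b > 0" using assms by auto
  have "(a+b-2)/(a*b) < 4*(a*b)/(a+b)^2"
  proof -
    have "(a+b-2)*(a+b)^2 < 4*(a*b)*(a*b)" using key by (simp add: power2_eq_square algebra_simps)
    thus ?thesis using pab by (simp add: divide_simps)
  qed
  hence "sqrt ((a+b-2)/(a*b)) < sqrt (4*(a*b)/(a+b)^2)" by (simp add: real_sqrt_less_iff)
  also have "\<dots> = 2*sqrt(a*b)/(a+b)" using pab
    by (simp add: real_sqrt_divide real_sqrt_mult)
  finally show ?thesis .
qed
lemma the_edge:
  assumes sym: "\<And>x y. f x y = f y x"
  shows "(THE r. \<exists>u v. {a,b} = {u, v} \<and> r = f (g u) (g v)) = f (g a) (g b)"
proof (rule the_equality)
  show "\<exists>u v. {a,b} = {u, v} \<and> f (g a) (g b) = f (g u) (g v)" by blast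
next
  fix r assume "\<exists>u v. {a,b} = {u, v} \<and> r = f (g u) (g v)"
  then obtain u v where "{a,b} = {u,v}" "r = f (g u) (g v)" by blast
  thus "r = f (g a) (g b)" using sym by (auto simp: doubleton_eq_iff)
qed

theorem theorem3p6:
  fixes V :: "'a set" and E :: "'a set set"
  assumes "simple_graph V E"
    and "connected_graph V E"
    and "min_degree V E \<ge> 2"
    and "\<forall>u v. {u, v} \<in> E \<longrightarrow>
           \<bar>real (degree E u) - real (degree E v)\<bar>
             \<le> (2 * real (min (degree E u) (degree E v)) - 1) ^ 2"
  shows "GA_index E > ABC_index E"
proof -
  have finV: "finite V" and EV: "\<And>e. e \<in> E \<Longrightarrow> e \<subseteq> V \<and> card e = 2"
    using assms(1) unfolding simple_graph_def by auto
  have finE: "finite E" using EV finV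
    by (meson PowI finite_Pow_iff finite_subset subsetI)
  have degV: "\<And>x. x \<in> V \<Longrightarrow> degree E x \<ge> 2"
  proof -
    fix x assume "x \<in> V"
    hence "Min (degree E ` V) \<le> degree E x" using finV by (intro Min_le) auto
    thus "degree E x \<ge> 2" using assms(3) unfolding min_degree_def by simp
  qed
  have Ene: "E \<noteq> {}"
  proof
    assume "E = {}"
    obtain x where "x \<in> V" using assms(2) unfolding connected_graph_def by auto
    with degV[OF this] \<open>E = {}\<close> show False by (simp add: degree_def)
  qed
  let ?d = "\<lambda>x. real (degree E x)"
  have "(\<Sum>e\<in>E. (THE r. \<exists>u v. e = {u, v} \<and> r = (\<lambda>a b. sqrt ((a + b - 2) / (a * b))) (?d u) (?d v)))
      < (\<Sum>e\<in>E. (THE r. \<exists>u v. e = {u, v} \<and> r = (\<lambda>a b. 2 * sqrt (a * b) / (a + b)) (?d u) (?d v)))"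
  proof (rule sum_strict_mono[OF finE Ene])
    fix e assume eE: "e \<in> E"
    then obtain a b where eab: "e = {a,b}" "a \<noteq> b" using EV by (meson card_2_iff)
    have ab: "a \<in> V" "b \<in> V" using EV eE eab by auto
    have s1: "\<And>x y::real. sqrt ((x + y - 2) / (x * y)) = sqrt ((y + x - 2) / (y * x))"
      by (simp add: algebra_simps)
    have s2: "\<And>x y::real. 2 * sqrt (x * y) / (x + y) = 2 * sqrt (y * x) / (y + x)"
      by (simp add: algebra_simps)
    have "sqrt ((?d a + ?d b - 2) / (?d a * ?d b)) < 2 * sqrt (?d a * ?d b) / (?d a + ?d b)"
    proof (rule edge_ineq)
      show "?d a \<ge> 2" "?d b \<ge> 2" using degV ab by auto
      have "\<bar>?d a - ?d b\<bar> \<le> (2 * real (min (degree E a) (degree E b)) - 1) ^ 2"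
        using assms(4) eE eab by auto
      thus "\<bar>?d a - ?d b\<bar> \<le> (2 * min (?d a) (?d b) - 1) ^ 2" by (simp add: of_nat_min)
    qed
    thus "(THE r. \<exists>u v. e = {u, v} \<and> r = (\<lambda>a b. sqrt ((a + b - 2) / (a * b))) (?d u) (?d v))
      < (THE r. \<exists>u v. e = {u, v} \<and> r = (\<lambda>a b. 2 * sqrt (a * b) / (a + b)) (?d u) (?d v))"
      unfolding eab(1)
      using the_edge[of "\<lambda>a b. sqrt ((a + b - 2) / (a * b))", OF s1, where g="?d" and a=a and b=b]
            the_edge[of "\<lambda>a b. 2 * sqrt (a * b) / (a + b)", OF s2, where g="?d" and a=a and b=b]
      by simp
  qed
  thus ?thesis unfolding GA_index_def ABC_index_def edge_sum_def .
qed

end
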